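(* Let $g\in\mathbf{Sp}(2n,\mathbb Z)$ and $m\ge1$. (1) If $g\in\Gamma(m)$ then $\tau(g)g^{-1}\in\Gamma(2m)$. (2) If $g\in\Gamma(2m)$ then $\tau(g)g\in\Gamma(4m)$. (3) If $\tau(g)g^{-1}\in\Gamma(4m)$ then $g=\beta u$ for some $\beta\in\Gamma_{2m}(2)$ and some $u\in\mathbf{GL}(n,\mathbb Z)$.
   Context: $\mathbf{Sp}(2n,\mathbb Z)$: integral matrices $g=\begin{pmatrix}A&B\\C&D\end{pmatrix}$ with ${}^tgJg=J$, $J=\begin{pmatrix}0&I\\-I&0\end{pmatrix}$. $\tau\begin{pmatrix}A&B\\C&D\end{pmatrix}=\begin{pmatrix}A&-B\\-C&D\end{pmatrix}$. $\Gamma(N)=\{\gamma\in\mathbf{Sp}(2n,\mathbb Z):\gamma\equiv I\bmod N\}$ (so $\Gamma(1)=\mathbf{Sp}(2n,\mathbb Z)$). $\Gamma_{2m}(2)=\{\begin{pmatrix}A&B\\C&D\end{pmatrix}\in\mathbf{Sp}(2n,\mathbb Z):A,D\equiv I\bmod2,\ B,C\equiv0\bmod2m\}$. $\mathbf{GL}(n,\mathbb Z)$ is embedded in $\mathbf{Sp}(2n,\mathbb Z)$ via $U\mapsto\mathrm{diag}(U,{}^tU^{-1})$. *)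

theory Defs
  imports "HOL-Analysis.Analysis" "HOL-Number_Theory.Cong"
begin

(* 2n x 2n integer matrices are indexed by the type 'n + 'n:
   Inl i = first block of coordinates, Inr i = second block.
   Blocks: A = (Inl,Inl), B = (Inl,Inr), C = (Inr,Inl), D = (Inr,Inr). *)
type_synonym 'n smat = "int ^ ('n + 'n) ^ ('n + 'n)"

definition Jmat :: "'n::finite smat" where
  "Jmat = (\<chi> i j. case (i, j) of
      (Inl a, Inr b) \<Rightarrow> (if a = b then 1 else 0)
    | (Inr a, Inl b) \<Rightarrow> (if a = b then -1 else 0)
    | _ \<Rightarrow> 0)"

definition Sp :: "'n::finite smat set" where
  "Sp = {g. transpose g ** Jmat ** g = Jmat}"

definition tau :: "'n::finite smat \<Rightarrow> 'n smat" where
  "tau g = (\<chi> i j. if isl i = isl j then g $ i $ j else - (g $ i $ j))"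

definition Gamma :: "int \<Rightarrow> 'n::finite smat set" where
  "Gamma N = {g \<in> Sp. \<forall>i j. [g $ i $ j = (mat 1 :: 'n smat) $ i $ j] (mod N)}"

definition Gamma2 :: "int \<Rightarrow> 'n::finite smat set" where
  "Gamma2 m = {g \<in> Sp. \<forall>i j.
      (isl i = isl j \<longrightarrow> [g $ i $ j = (mat 1 :: 'n smat) $ i $ j] (mod 2)) \<and>
      (isl i \<noteq> isl j \<longrightarrow> [g $ i $ j = 0] (mod (2 * m)))}"

definition GLZ :: "(int ^ 'n ^ 'n) set" where
  "GLZ = {U. invertible U}"

definition embGL :: "int ^ 'n::finite ^ 'n \<Rightarrow> 'n smat" where
  "embGL U = (\<chi> i j. case (i, j) of
      (Inl a, Inl b) \<Rightarrow> U $ a $ b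
    | (Inr a, Inr b) \<Rightarrow> transpose (matrix_inv U) $ a $ b
    | _ \<Rightarrow> 0)"

end

theory Submission
  imports Defs
begin


definition mcong :: "int \<Rightarrow> int^'n^'m \<Rightarrow> int^'n^'m \<Rightarrow> bool" where
  "mcong N A B \<longleftrightarrow> (\<forall>i j. [A$i$j = B$i$j] (mod N))"

lemma mcong_mult:
  fixes A A' :: "int^'k^'m" and B B' :: "int^'n^'k"
  assumes "mcong N A A'" "mcong N B B'"
  shows "mcong N (A ** B) (A' ** B')"
  using assms unfolding mcong_def matrix_matrix_mult_def
  by (auto intro!: cong_sum cong_mult)

lemma mcong_refl[simp]: "mcong N A A" by (simp add: mcong_def)
lemma mcong_sym: "mcong N A B \<Longrightarrow> mcong N B A" by (auto simp: mcong_def cong_sym)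
lemma mcong_trans: "mcong N A B \<Longrightarrow> mcong N B C \<Longrightarrow> mcong N A C"
  unfolding mcong_def by (metis cong_trans)

lemma inv_props:
  assumes "invertible (A::'a::semiring_1^'n^'m)"
  shows "A ** matrix_inv A = mat 1 \<and> matrix_inv A ** A = mat 1"
  using assms unfolding matrix_inv_def invertible_def by (rule someI_ex)

definition rm :: "int^'n^'m \<Rightarrow> real^'n^'m" where
  "rm A = (\<chi> i j. real_of_int (A$i$j))"

lemma rm_mult: "rm (A ** B) = rm A ** rm B"
  by (simp add: rm_def matrix_matrix_mult_def vec_eq_iff)

lemma rm_one: "rm (mat 1 :: int^'n^'n) = mat 1"
  by (simp add: rm_def mat_def vec_eq_iff)

lemma rm_inj: "rm A = rm B \<Longrightarrow> A = B"
  by (simp add: rm_def vec_eq_iff)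

lemma int_left_right:
  fixes A B :: "int^'n^'n"
  assumes "A ** B = mat 1" shows "B ** A = mat 1"
proof -
  have "rm A ** rm B = mat 1" using assms by (metis rm_mult rm_one)
  then have "rm B ** rm A = mat 1" using matrix_left_right_inverse by blast
  then show ?thesis by (metis rm_mult rm_one rm_inj)
qed

lemma lift_step:
  fixes A E F :: "int^'n^'n"
  assumes "F ** E = mat 1" "\<exists>U. invertible U \<and> mcong 2 U (E ** A)"
  shows "\<exists>U. invertible U \<and> mcong 2 U A"
proof -
  obtain U where U: "invertible U" "mcong 2 U (E ** A)" using assms by blast
  have "invertible F" using assms(1) int_left_right unfolding invertible_def by blast
  then have "invertible (F ** U)" using U(1) invertible_mult by blast
  moreover have "mcong 2 (F ** U) (F ** (E ** A))" using U(2) mcong_mult mcong_refl by blast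
  moreover have "F ** (E ** A) = A" by (simp add: matrix_mul_assoc assms(1))
  ultimately show ?thesis by auto
qed

lemma madd_r: "((A::int^'k^'m) + B) ** C = A ** C + B ** C"
  by (simp add: matrix_matrix_mult_def vec_eq_iff sum.distrib algebra_simps)
lemma madd_l: "(C::int^'k^'m) ** (A + B) = C ** A + C ** B"
  by (simp add: matrix_matrix_mult_def vec_eq_iff sum.distrib algebra_simps)
lemma msub_r: "((A::int^'k^'m) - B) ** C = A ** C - B ** C"
  by (simp add: matrix_matrix_mult_def vec_eq_iff sum_subtractf algebra_simps)
lemma msub_l: "(C::int^'k^'m) ** (A - B) = C ** A - C ** B"
  by (simp add: matrix_matrix_mult_def vec_eq_iff sum_subtractf algebra_simps)
lemma mneg_l: "(- (A::int^'k^'m)) ** C = - (A ** C)"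
  by (simp add: matrix_matrix_mult_def vec_eq_iff sum_negf)
lemma mneg_r: "(C::int^'k^'m) ** (- A) = - (C ** A)"
  by (simp add: matrix_matrix_mult_def vec_eq_iff sum_negf)

lemma nil_inv:
  fixes N :: "int^'n^'n"
  assumes "N ** N = 0"
  shows "(mat 1 - N) ** (mat 1 + N) = mat 1"
  using assms by (simp add: madd_l msub_r)

lemma cong2: "[(a::int) = b] (mod 2) \<longleftrightarrow> (even a \<longleftrightarrow> even b)"
  unfolding cong_def by presburger

definition colok :: "int^'n^'n \<Rightarrow> 'n \<Rightarrow> bool" where
  "colok A j \<longleftrightarrow> odd (A$j$j) \<and> (\<forall>i. i \<noteq> j \<longrightarrow> even (A$i$j))"

lemma nil_entry1:
  fixes A :: "int^'n^'n"
  shows "((\<chi> i j. if i = k \<and> j = l then 1 else 0) ** A) $ i $ j = (if i = k then A$l$j else 0)"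
  by (simp add: matrix_matrix_mult_def if_distrib[of "\<lambda>x. x * y" for y] cong: if_cong)

lemma nil_sq1:
  assumes "k \<noteq> l"
  shows "(\<chi> i j. if i = k \<and> j = l then 1 else 0) ** (\<chi> i j. if i = k \<and> j = l then 1 else 0) = (0::int^'n^'n)"
  using assms by (simp add: nil_entry1 vec_eq_iff)

lemma nil_entry2:
  fixes A :: "int^'n^'n"
  shows "((\<chi> i j. if j = k then c i else 0) ** A) $ i $ j = c i * A$k$j"
  by (simp add: matrix_matrix_mult_def if_distrib[of "\<lambda>x. x * y" for y] cong: if_cong)

lemma nil_sq2:
  assumes "c k = 0"
  shows "(\<chi> i j. if j = k then c i else 0) ** (\<chi> i j. if j = k then c i else 0) = (0::int^'n^'n)"
  using assms by (simp add: nil_entry2 vec_eq_iff)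

lemma nil_pair:
  fixes N :: "int^'n^'n"
  assumes "N ** N = 0"
  shows "(mat 1 - N) ** (mat 1 + N) = mat 1" "(mat 1 + N) ** (mat 1 - N) = mat 1"
  using nil_inv[OF assms] int_left_right by blast+

lemma plusN: "((mat 1 + N) ** (A::int^'n^'n)) = A + N ** A"
  by (simp add: madd_r)

lemma lift_base:
  fixes A :: "int^'n^'n"
  assumes "\<And>j. colok A j"
  shows "\<exists>U. invertible U \<and> mcong 2 U A"
proof -
  have "mcong 2 (mat 1) A"
    unfolding mcong_def cong2 using assms by (auto simp: colok_def mat_def)
  moreover have "invertible (mat 1 :: int^'n^'n)" unfolding invertible_def by auto
  ultimately show ?thesis by blast
qed

lemma pivot_exists:
  fixes A D :: "int^'n^'n"
  assumes hD: "mcong 2 (D ** A) (mat 1)" and hc: "\<And>j. j \<notin> S \<Longrightarrow> colok A j" and k: "k \<in> S"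
  shows "\<exists>l\<in>S. odd (A$l$k)"
proof (rule ccontr)
  assume "\<not> ?thesis"
  then have ev: "\<And>l. l \<in> S \<Longrightarrow> even (A$l$k)" by blast
  have Dkl: "even (D$k$l)" if "l \<notin> S" for l
  proof -
    have "[(D ** A)$k$l = (\<Sum>m\<in>UNIV. D$k$m * (mat 1 :: int^'n^'n)$m$l)] (mod 2)"
      unfolding matrix_matrix_mult_def vec_lambda_beta
    proof (rule cong_sum, rule cong_mult[OF cong_refl])
      fix m show "[A $ m $ l = mat 1 $ m $ l] (mod 2)"
        using hc[OF that] by (auto simp: mat_def cong2 colok_def)
    qed
    moreover have "(\<Sum>m\<in>UNIV. D$k$m * (mat 1 :: int^'n^'n)$m$l) = D$k$l"
      by (simp add: mat_def if_distrib[of "\<lambda>x. y * x" for y] cong: if_cong)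
    moreover have "k \<noteq> l" using k that by blast
    moreover have "[(D ** A)$k$l = (if k = l then 1 else 0)] (mod 2)" using hD unfolding mcong_def
      by (simp add: mat_def)
    ultimately show ?thesis by (simp add: cong2 del: vector_matrix_mult_def)
  qed
  have "even ((D ** A)$k$k)"
    unfolding matrix_matrix_mult_def vec_lambda_beta
  proof (rule dvd_sum)
    fix m show "2 dvd D $ k $ m * A $ m $ k"
      using ev[of m] Dkl[of m] by (cases "m \<in> S") auto
  qed
  moreover have "[(D ** A)$k$k = 1] (mod 2)" using hD unfolding mcong_def mat_def
    by (erule_tac allE[of _ k], erule_tac allE[of _ k]) simp
  ultimately show False by (simp add: cong2)
qed

lemma pivot_fix:
  fixes A D :: "int^'n^'n"
  assumes hD: "mcong 2 (D ** A) (mat 1)" and hc: "\<And>j. j \<notin> S \<Longrightarrow> colok A j" and k: "k \<in> S"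
  shows "\<exists>E F. F ** E = mat 1 \<and> E ** F = mat 1 \<and> odd ((E ** A)$k$k) \<and> (\<forall>j. j \<notin> S \<longrightarrow> colok (E ** A) j)"
proof (cases "odd (A$k$k)")
  case True
  then show ?thesis using hc by (intro exI[of _ "mat 1"]) auto
next
  case False
  obtain l where l: "l \<in> S" "odd (A$l$k)" using pivot_exists[OF hD hc k] by blast
  with False have kl: "k \<noteq> l" by auto
  define N :: "int^'n^'n" where "N = (\<chi> i j. if i = k \<and> j = l then 1 else 0)"
  have NN: "N ** N = 0" unfolding N_def using nil_sq1[OF kl] .
  have ent: "((mat 1 + N) ** A)$i$j = A$i$j + (if i = k then A$l$j else 0)" for i j
    unfolding plusN N_def by (simp add: nil_entry1)
  show ?thesis
  proof (intro exI conjI allI impI)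
    show "(mat 1 - N) ** (mat 1 + N) = mat 1" "(mat 1 + N) ** (mat 1 - N) = mat 1"
      using nil_pair[OF NN] by auto
    show "odd (((mat 1 + N) ** A)$k$k)" unfolding ent using False l by simp
    fix j assume j: "j \<notin> S"
    have "l \<noteq> j" "k \<noteq> j" using j l k by auto
    then show "colok ((mat 1 + N) ** A) j" using hc[OF j] unfolding colok_def ent
      by auto
  qed
qed

lemma clear_col:
  fixes A :: "int^'n^'n"
  assumes odd: "odd (A$k$k)" and hc: "\<And>j. j \<notin> S \<Longrightarrow> colok A j" and k: "k \<in> S"
  shows "\<exists>E F. F ** E = mat 1 \<and> E ** F = mat 1 \<and> (\<forall>j. j \<notin> S - {k} \<longrightarrow> colok (E ** A) j)"
proof -
  define c where "c = (\<lambda>i. if i = k then 0 else - A$i$k)"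
  define N :: "int^'n^'n" where "N = (\<chi> i j. if j = k then c i else 0)"
  have NN: "N ** N = 0" unfolding N_def by (rule nil_sq2) (simp add: c_def)
  have ent: "((mat 1 + N) ** A)$i$j = A$i$j + c i * A$k$j" for i j
    unfolding plusN N_def by (simp add: nil_entry2)
  show ?thesis
  proof (intro exI conjI allI impI)
    show "(mat 1 - N) ** (mat 1 + N) = mat 1" "(mat 1 + N) ** (mat 1 - N) = mat 1"
      using nil_pair[OF NN] by auto
    fix j assume j: "j \<notin> S - {k}"
    show "colok ((mat 1 + N) ** A) j"
    proof (cases "j = k")
      case True
      then show ?thesis using odd unfolding colok_def ent c_def by auto
    next
      case False
      then have "j \<notin> S" "k \<noteq> j" using j by auto
      then show ?thesis using hc[of j] unfolding colok_def ent c_def by auto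
    qed
  qed
qed

lemma lift_gen:
  fixes K :: "'n::finite set"
  assumes "finite K"
  shows "\<And>A D::int^'n^'n. mcong 2 (D ** A) (mat 1) \<Longrightarrow> (\<And>j. j \<notin> K \<Longrightarrow> colok A j)
     \<Longrightarrow> \<exists>U. invertible U \<and> mcong 2 U A"
  using assms
proof (induction K rule: finite_induct)
  case empty
  then show ?case using lift_base by blast
next
  case (insert k K A D)
  have kS: "k \<in> insert k K" by simp
  obtain E1 F1 where E1: "F1 ** E1 = mat 1" "E1 ** F1 = mat 1" "odd ((E1 ** A)$k$k)"
    "\<And>j. j \<notin> insert k K \<Longrightarrow> colok (E1 ** A) j"
    using pivot_fix[OF insert.prems(1) insert.prems(2) kS] by blast
  obtain E2 F2 where E2: "F2 ** E2 = mat 1" "E2 ** F2 = mat 1"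
    "\<And>j. j \<notin> insert k K - {k} \<Longrightarrow> colok (E2 ** (E1 ** A)) j"
    using clear_col[OF E1(3) E1(4) kS] by blast
  have "insert k K - {k} = K" using insert.hyps(2) by auto
  then have c2: "\<And>j. j \<notin> K \<Longrightarrow> colok (E2 ** (E1 ** A)) j" using E2(3) by auto
  have "(D ** F1 ** F2) ** (E2 ** (E1 ** A)) = D ** F1 ** (F2 ** E2) ** E1 ** A"
    by (simp add: matrix_mul_assoc)
  also have "\<dots> = D ** (F1 ** E1) ** A" using E2(1) by (simp add: matrix_mul_assoc)
  also have "\<dots> = D ** A" using E1(1) by simp
  finally have "mcong 2 ((D ** F1 ** F2) ** (E2 ** (E1 ** A))) (mat 1)" using insert.prems(1) by simp
  from insert.IH[OF this c2] have "\<exists>U. invertible U \<and> mcong 2 U (E2 ** (E1 ** A))" .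
  then have "\<exists>U. invertible U \<and> mcong 2 U (E1 ** A)" using lift_step[OF E2(1)] by blast
  then show ?case using lift_step[OF E1(1)] by blast
qed

lemma lift_mod2:
  fixes A D :: "int^'n^'n"
  assumes "mcong 2 (D ** A) (mat 1)"
  shows "\<exists>U. invertible U \<and> mcong 2 U A"
  by (rule lift_gen[OF finite[of UNIV] assms]) simp



definition sg :: "'a + 'a \<Rightarrow> int" where "sg i = (if isl i then 1 else -1)"
fun swp :: "'a + 'a \<Rightarrow> 'a + 'a" where
  "swp (Inl a) = Inr a" | "swp (Inr a) = Inl a"

lemma swp_swp[simp]: "swp (swp i) = i" by (cases i) auto
lemma swp_eq: "(j = swp l) \<longleftrightarrow> (l = swp j)" by (metis swp_swp)
lemma sg_swp[simp]: "sg (swp i) = - sg i" by (cases i) (auto simp: sg_def)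
lemma isl_swp[simp]: "isl (swp i) = (\<not> isl i)" by (cases i) auto
lemma sg_sq[simp]: "sg i * sg i = 1" by (auto simp: sg_def)

lemma J_ent: "(Jmat :: 'n::finite smat) $ i $ j = (if j = swp i then sg i else 0)"
  unfolding Jmat_def by (cases i; cases j) (auto simp: sg_def)

lemma J_mult_l: "((Jmat :: 'n::finite smat) ** M) $ i $ j = sg i * M $ (swp i) $ j"
  unfolding matrix_matrix_mult_def J_ent
  by (simp add: if_distrib[of "\<lambda>x. x * y" for y] cong: if_cong)

lemma J_mult_r: "(M ** (Jmat :: 'n::finite smat)) $ i $ j = M $ i $ (swp j) * sg (swp j)"
proof -
  have "(M ** (Jmat :: 'n::finite smat)) $ i $ j = (\<Sum>k\<in>UNIV. if k = swp j then M $ i $ k * sg k else 0)"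
    unfolding matrix_matrix_mult_def J_ent vec_lambda_beta by (rule sum.cong[OF refl]) auto
  then show ?thesis by simp
qed

lemma JJ: "(Jmat :: 'n::finite smat) ** Jmat = - mat 1"
  by (simp add: vec_eq_iff J_mult_l J_ent mat_def)

lemma Sp_left_inv:
  fixes g :: "'n::finite smat"
  assumes "g \<in> Sp"
  shows "(- (Jmat ** transpose g ** Jmat)) ** g = mat 1"
proof -
  have "(- (Jmat ** transpose g ** Jmat)) ** g = - (Jmat ** (transpose g ** Jmat ** g))"
    by (simp add: mneg_l matrix_mul_assoc)
  also have "\<dots> = - (Jmat ** Jmat)" using assms by (simp add: Sp_def)
  finally show ?thesis by (simp add: JJ)
qed

lemma Sp_invertible:
  fixes g :: "'n::finite smat"
  assumes "g \<in> Sp"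
  shows "g ** matrix_inv g = mat 1" "matrix_inv g ** g = mat 1"
proof -
  have "invertible g" unfolding invertible_def
    using Sp_left_inv[OF assms] int_left_right by blast
  then show "g ** matrix_inv g = mat 1" "matrix_inv g ** g = mat 1" using inv_props by blast+
qed

lemma Sp_mult:
  fixes g k :: "'n::finite smat"
  assumes "g \<in> Sp" "k \<in> Sp"
  shows "g ** k \<in> Sp"
proof -
  have "transpose (g ** k) ** Jmat ** (g ** k) = transpose k ** (transpose g ** Jmat ** g) ** k"
    by (simp add: matrix_transpose_mul matrix_mul_assoc)
  also have "\<dots> = Jmat" using assms by (simp add: Sp_def)
  finally show ?thesis by (simp add: Sp_def)
qed

lemma Sp_rinv:
  fixes g h :: "'n::finite smat"
  assumes "g \<in> Sp" "g ** h = mat 1"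
  shows "h \<in> Sp"
proof -
  have "transpose h ** Jmat ** h = transpose h ** (transpose g ** Jmat ** g) ** h"
    using assms by (simp add: Sp_def)
  also have "\<dots> = transpose (g ** h) ** Jmat ** (g ** h)"
    by (simp add: matrix_transpose_mul matrix_mul_assoc)
  also have "\<dots> = Jmat" using assms by simp
  finally show ?thesis by (simp add: Sp_def)
qed

definition Kmat :: "'n::finite smat" where "Kmat = (\<chi> i j. if i = j then sg i else 0)"

lemma K_mult_l: "((Kmat :: 'n::finite smat) ** M) $ i $ j = sg i * M $ i $ j"
  unfolding matrix_matrix_mult_def Kmat_def
  by (simp add: if_distrib[of "\<lambda>x. x * y" for y] cong: if_cong)

lemma K_mult_r: "(M ** (Kmat :: 'n::finite smat)) $ i $ j = M $ i $ j * sg j"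
  unfolding matrix_matrix_mult_def Kmat_def
  by (simp add: if_distrib[of "\<lambda>x. y * x" for y] cong: if_cong)

lemma tau_K: "tau g = Kmat ** g ** Kmat"
  by (simp add: vec_eq_iff K_mult_l K_mult_r tau_def sg_def)

lemma transK: "transpose (Kmat :: 'n::finite smat) = Kmat"
  by (simp add: vec_eq_iff transpose_def Kmat_def)

lemma KJK: "(Kmat :: 'n::finite smat) ** Jmat ** Kmat = - Jmat"
  by (simp add: vec_eq_iff K_mult_l K_mult_r J_ent sg_def)

lemma KK: "(Kmat :: 'n::finite smat) ** Kmat = mat 1"
  unfolding vec_eq_iff K_mult_l by (simp add: Kmat_def mat_def sg_def)

lemma tau_Sp:
  fixes g :: "'n::finite smat"
  assumes "g \<in> Sp"
  shows "tau g \<in> Sp"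
proof -
  have "transpose (tau g) ** Jmat ** tau g = Kmat ** transpose g ** (Kmat ** Jmat ** Kmat) ** g ** Kmat"
    by (simp add: tau_K matrix_transpose_mul matrix_mul_assoc transK)
  also have "\<dots> = - (Kmat ** (transpose g ** Jmat ** g) ** Kmat)"
    by (simp add: KJK mneg_l mneg_r matrix_mul_assoc)
  also have "\<dots> = - (Kmat ** Jmat ** Kmat)" using assms by (simp add: Sp_def)
  also have "\<dots> = Jmat" by (simp add: KJK)
  finally show ?thesis by (simp add: Sp_def)
qed

definition off :: "'n::finite smat \<Rightarrow> 'n smat" where
  "off g = (\<chi> i j. if isl i = isl j then 0 else g $ i $ j)"

lemma tau_mult_ent: "(tau g ** M) $ i $ j = (g ** M) $ i $ j - 2 * (off g ** M) $ i $ j"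
proof -
  have "(tau g ** M) $ i $ j = (\<Sum>l\<in>UNIV. g$i$l * M$l$j - 2 * ((off g)$i$l * M$l$j))"
    unfolding matrix_matrix_mult_def tau_def off_def by (auto intro!: sum.cong)
  also have "\<dots> = (g ** M) $ i $ j - 2 * (off g ** M) $ i $ j"
    unfolding matrix_matrix_mult_def by (simp add: sum_subtractf sum_distrib_left)
  finally show ?thesis .
qed



lemma dvd_mult_l:
  fixes P :: "int^'k^'m" and M :: "int^'n^'k"
  assumes "\<And>i l. N dvd P$i$l"
  shows "N dvd (P ** M)$i$j"
  unfolding matrix_matrix_mult_def vec_lambda_beta using assms by (auto intro!: dvd_sum)

lemma dvd_mult_r:
  fixes P :: "int^'k^'m" and M :: "int^'n^'k"
  assumes "\<And>l j. N dvd M$l$j"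
  shows "N dvd (P ** M)$i$j"
  unfolding matrix_matrix_mult_def vec_lambda_beta using assms by (auto intro!: dvd_sum)

lemma dvd_mult_lr:
  fixes P :: "int^'k^'m" and M :: "int^'n^'k"
  assumes "\<And>i l. a dvd P$i$l" "\<And>l j. b dvd M$l$j"
  shows "(a * b) dvd (P ** M)$i$j"
  unfolding matrix_matrix_mult_def vec_lambda_beta using assms by (auto intro!: dvd_sum mult_dvd_mono)

lemma off_dvd:
  assumes "\<forall>i j. [g$i$j = (mat 1 :: 'n::finite smat)$i$j] (mod N)"
  shows "N dvd (off g)$i$j"
proof (cases "isl i = isl j")
  case False
  then have "i \<noteq> j" by auto
  moreover have "[g$i$j = (mat 1 :: 'n::finite smat)$i$j] (mod N)" using assms by blast
  ultimately show ?thesis using False by (simp add: off_def mat_def cong_0_iff)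
qed (simp add: off_def)

lemma part1:
  fixes g :: "'n::finite smat" and m :: int
  assumes g: "g \<in> Gamma m"
  shows "tau g ** matrix_inv g \<in> Gamma (2 * m)"
proof -
  have Sp: "g \<in> Sp" using g by (simp add: Gamma_def)
  note inv = Sp_invertible[OF Sp]
  have "tau g ** matrix_inv g \<in> Sp" using Sp_mult[OF tau_Sp[OF Sp] Sp_rinv[OF Sp inv(1)]] .
  moreover have "[(tau g ** matrix_inv g)$i$j = (mat 1 :: 'n smat)$i$j] (mod (2*m))" for i j
  proof -
    have "m dvd (off g ** matrix_inv g)$i$j"
      by (rule dvd_mult_l, rule off_dvd) (use g in \<open>simp add: Gamma_def\<close>)
    then have "2 * m dvd 2 * (off g ** matrix_inv g)$i$j" by simp
    then show ?thesis unfolding tau_mult_ent inv(1) cong_iff_dvd_diff by simp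
  qed
  ultimately show ?thesis by (simp add: Gamma_def)
qed

lemma part2:
  fixes g :: "'n::finite smat" and m :: int
  assumes g: "g \<in> Gamma (2 * m)"
  shows "tau g ** g \<in> Gamma (4 * m)"
proof -
  have Sp: "g \<in> Sp" using g by (simp add: Gamma_def)
  have gc: "\<forall>i j. [g$i$j = (mat 1 :: 'n smat)$i$j] (mod (2*m))" using g by (simp add: Gamma_def)
  have "tau g ** g \<in> Sp" using Sp_mult[OF tau_Sp[OF Sp] Sp] .
  moreover have "[(tau g ** g)$i$j = (mat 1 :: 'n smat)$i$j] (mod (4*m))" for i j
  proof -
    have "2 * m dvd (off g ** g)$i$j"
      by (rule dvd_mult_l, rule off_dvd) (use gc in simp)
    then have a: "4 * m dvd 2 * (off g ** g)$i$j"
      using mult_dvd_mono[of 2 2 "2*m"] by (simp add: mult.assoc)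
    define P where "P = g - mat 1"
    have Pd: "2 * m dvd P$i$j" for i j using gc unfolding P_def cong_iff_dvd_diff by simp
    have "g = mat 1 + P" unfolding P_def by simp
    then have "g ** g = (mat 1 + P) ** (mat 1 + P)" by simp
    also have "\<dots> = mat 1 + P + (P + P ** P)" by (simp add: madd_l madd_r)
    finally have gg: "(g ** g)$i$j = (mat 1 :: 'n smat)$i$j + 2 * P$i$j + (P ** P)$i$j" by simp
    have "(2*m)*(2*m) dvd (P ** P)$i$j" by (rule dvd_mult_lr) (use Pd in auto)
    moreover have "(2*m)*(2*m) = (4*m)*m" by simp
    ultimately have b: "4 * m dvd (P ** P)$i$j" using dvd_mult_left[of "4*m" m] by metis
    have c: "4 * m dvd 2 * P$i$j" using Pd[of i j] mult_dvd_mono[of 2 2 "2*m"] by (simp add: mult.assoc)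
    show ?thesis unfolding tau_mult_ent gg cong_iff_dvd_diff
      using a b c by (simp add: algebra_simps dvd_diff dvd_add)
  qed
  ultimately show ?thesis by (simp add: Gamma_def)
qed

lemma part3a:
  fixes g :: "'n::finite smat" and m :: int
  assumes Sp: "g \<in> Sp" and h: "tau g ** matrix_inv g \<in> Gamma (4 * m)"
  shows "2 * m dvd (off g)$i$j"
proof -
  note inv = Sp_invertible[OF Sp]
  have x: "2 * m dvd (off g ** matrix_inv g)$i$j" for i j
  proof -
    have "[(tau g ** matrix_inv g)$i$j = (mat 1 :: 'n smat)$i$j] (mod (4*m))"
      using h by (simp add: Gamma_def)
    then have "(2 * m) * 2 dvd 2 * (off g ** matrix_inv g)$i$j"
      unfolding tau_mult_ent inv(1) cong_iff_dvd_diff by (simp add: algebra_simps)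
    then show ?thesis by (metis dvd_times_right_cancel_iff mult.commute zero_neq_numeral)
  qed
  have "off g = (off g ** matrix_inv g) ** g" using inv(2) by (simp flip: matrix_mul_assoc)
  then show ?thesis by (metis dvd_mult_l x)
qed



lemma sum_split: "sum f (UNIV :: ('a::finite + 'a) set) = (\<Sum>a\<in>UNIV. f (Inl a)) + (\<Sum>a\<in>UNIV. f (Inr a))"
  by (subst UNIV_Plus_UNIV[symmetric], subst sum.Plus) (auto simp: o_def)

definition dg :: "int^'n^'n \<Rightarrow> int^'n^'n \<Rightarrow> 'n::finite smat" where
  "dg P Q = (\<chi> i j. case (i, j) of (Inl a, Inl b) \<Rightarrow> P$a$b | (Inr a, Inr b) \<Rightarrow> Q$a$b | _ \<Rightarrow> 0)"
definition ob :: "int^'n^'n \<Rightarrow> int^'n^'n \<Rightarrow> 'n::finite smat" where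
  "ob X Y = (\<chi> i j. case (i, j) of (Inl a, Inr b) \<Rightarrow> X$a$b | (Inr a, Inl b) \<Rightarrow> Y$a$b | _ \<Rightarrow> 0)"

lemma dg_dg: "dg P Q ** dg P' Q' = dg (P ** P') (Q ** Q')"
  unfolding vec_eq_iff
proof (intro allI)
  fix i j :: "'a + 'a"
  show "(dg P Q ** dg P' Q') $ i $ j = dg (P ** P') (Q ** Q') $ i $ j"
    by (cases i; cases j) (simp_all add: matrix_matrix_mult_def sum_split dg_def)
qed

lemma dg_ob: "dg P Q ** ob X Y = ob (P ** X) (Q ** Y)"
  unfolding vec_eq_iff
proof (intro allI)
  fix i j :: "'a + 'a"
  show "(dg P Q ** ob X Y) $ i $ j = ob (P ** X) (Q ** Y) $ i $ j"
    by (cases i; cases j) (simp_all add: matrix_matrix_mult_def sum_split dg_def ob_def)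
qed

lemma ob_dg: "ob X Y ** dg P Q = ob (X ** Q) (Y ** P)"
  unfolding vec_eq_iff
proof (intro allI)
  fix i j :: "'a + 'a"
  show "(ob X Y ** dg P Q) $ i $ j = ob (X ** Q) (Y ** P) $ i $ j"
    by (cases i; cases j) (simp_all add: matrix_matrix_mult_def sum_split dg_def ob_def)
qed

lemma dg_trans: "transpose (dg P Q) = dg (transpose P) (transpose Q)"
  unfolding vec_eq_iff
proof (intro allI)
  fix i j :: "'a + 'a"
  show "transpose (dg P Q) $ i $ j = dg (transpose P) (transpose Q) $ i $ j"
    by (cases i; cases j) (simp_all add: transpose_def dg_def)
qed

lemma dg_one: "dg (mat 1) (mat 1) = (mat 1 :: 'n::finite smat)"
  unfolding vec_eq_iff
proof (intro allI)
  fix i j :: "'n + 'n"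
  show "dg (mat 1) (mat 1) $ i $ j = (mat 1 :: 'n smat) $ i $ j"
    by (cases i; cases j) (simp_all add: mat_def dg_def)
qed

lemma J_ob: "(Jmat :: 'n::finite smat) = ob (mat 1) (- mat 1)"
  unfolding vec_eq_iff
proof (intro allI)
  fix i j :: "'n + 'n"
  show "(Jmat :: 'n smat) $ i $ j = ob (mat 1) (- mat 1) $ i $ j"
    by (cases i; cases j) (simp_all add: mat_def ob_def Jmat_def)
qed

lemma dg_Sp:
  fixes P Q :: "int^'n::finite^'n"
  assumes "Q ** P = mat 1"
  shows "dg P (transpose Q) \<in> Sp"
proof -
  have "transpose (dg P (transpose Q)) ** Jmat ** dg P (transpose Q)
      = ob (transpose P ** transpose Q) ((- Q) ** P)"
    unfolding J_ob dg_trans dg_ob ob_dg by (simp add: mneg_r mneg_l)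
  also have "\<dots> = ob (mat 1) (- mat 1)"
    using assms by (simp add: mneg_l flip: matrix_transpose_mul)
  finally show ?thesis unfolding Sp_def J_ob by simp
qed



lemma dg_zero: "isl l \<noteq> isl j \<Longrightarrow> (dg P Q :: 'n::finite smat) $ l $ j = 0"
  by (cases l; cases j) (auto simp: dg_def)

lemma part3:
  fixes g :: "'n::finite smat" and m :: int
  assumes Sp: "g \<in> Sp" and h: "tau g ** matrix_inv g \<in> Gamma (4 * m)"
  shows "\<exists>\<beta> \<in> Gamma2 m. \<exists>u \<in> GLZ. g = \<beta> ** embGL u"
proof -
  have offd: "\<And>i j. 2 * m dvd (off g)$i$j" using part3a[OF Sp h] .
  have offm: "2 * m dvd g$i$j" if "isl i \<noteq> isl j" for i j
    using offd[of i j] that by (simp add: off_def)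
  have off2: "2 dvd g$i$j" if "isl i \<noteq> isl j" for i j
    using offm[OF that] dvd_mult_left by blast
  define Am :: "int^'n^'n" where "Am = (\<chi> a b. g$Inl a$Inl b)"
  define Dt :: "int^'n^'n" where "Dt = (\<chi> a b. g$Inr b$Inr a)"
  define h0 where "h0 = - (Jmat ** transpose g ** Jmat)"
  have h0e: "h0$i$j = sg i * sg j * g$(swp j)$(swp i)" for i j
    unfolding h0_def by (simp add: J_mult_r J_mult_l transpose_def)
  have hg: "h0 ** g = mat 1" using Sp_left_inv[OF Sp] h0_def by simp
  have DA: "mcong 2 (Dt ** Am) (mat 1)"
    unfolding mcong_def
  proof (intro allI)
    fix a b
    have e: "(h0 ** g)$Inl a$Inl b = (Dt ** Am)$a$b + (\<Sum>c\<in>UNIV. (- g$Inl c$Inr a) * g$Inr c$Inl b)"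
      by (simp add: matrix_matrix_mult_def sum_split h0e Dt_def Am_def sg_def)
    have ev: "2 dvd (\<Sum>c\<in>UNIV. (- g$Inl c$Inr a) * g$Inr c$Inl b)"
      by (rule dvd_sum) (simp add: off2)
    have "(h0 ** g)$Inl a$Inl b = (mat 1 :: 'n smat)$Inl a$Inl b" using hg by simp
    then have "(Dt ** Am)$a$b + (\<Sum>c\<in>UNIV. (- g$Inl c$Inr a) * g$Inr c$Inl b) = (mat 1 :: int^'n^'n)$a$b"
      using e by (simp add: mat_def)
    then show "[(Dt ** Am)$a$b = (mat 1 :: int^'n^'n)$a$b] (mod 2)"
      using ev unfolding cong_iff_dvd_diff
    proof -
      assume eq: "(Dt ** Am)$a$b + (\<Sum>c\<in>UNIV. (- g$Inl c$Inr a) * g$Inr c$Inl b) = (mat 1 :: int^'n^'n)$a$b"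
      then have "(Dt ** Am)$a$b - (mat 1 :: int^'n^'n)$a$b = - (\<Sum>c\<in>UNIV. (- g$Inl c$Inr a) * g$Inr c$Inl b)"
        by linarith
      then show "2 dvd (Dt ** Am)$a$b - (mat 1 :: int^'n^'n)$a$b" using ev by simp
    qed
  qed
  obtain u where u: "invertible u" "mcong 2 u Am" using lift_mod2[OF DA] by blast
  define v where "v = matrix_inv u"
  have uv: "u ** v = mat 1" "v ** u = mat 1" using inv_props[OF u(1)] v_def by auto
  have emb: "embGL u = dg u (transpose v)" unfolding embGL_def dg_def v_def by simp
  define F where "F = dg v (transpose u)"
  have FE: "F ** embGL u = mat 1"
    unfolding F_def emb dg_dg by (simp add: uv dg_one flip: matrix_transpose_mul)
  have EF: "embGL u ** F = mat 1" using int_left_right[OF FE] .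
  have FSp: "F \<in> Sp" unfolding F_def using dg_Sp[of u v] uv(1) by simp
  have Dv: "mcong 2 Dt v"
  proof -
    have "Dt = (Dt ** u) ** v" using uv(1) by (simp flip: matrix_mul_assoc)
    moreover have "mcong 2 ((Dt ** u) ** v) ((Dt ** Am) ** v)"
      using mcong_mult[OF mcong_mult[OF mcong_refl u(2)] mcong_refl] .
    moreover have "mcong 2 ((Dt ** Am) ** v) (mat 1 ** v)"
      using mcong_mult[OF DA mcong_refl] .
    ultimately show ?thesis by (metis mcong_trans matrix_mul_lid)
  qed
  have gE: "mcong 2 g (embGL u)"
    unfolding mcong_def
  proof (intro allI)
    fix i j :: "'n + 'n"
    show "[g $ i $ j = embGL u $ i $ j] (mod 2)"
    proof (cases i; cases j)
      fix a b assume ij: "i = Inl a" "j = Inl b"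
      then show ?thesis using u(2) unfolding emb mcong_def Am_def by (simp add: dg_def cong_sym)
    next
      fix a b assume ij: "i = Inr a" "j = Inr b"
      then show ?thesis using Dv unfolding emb mcong_def Dt_def by (simp add: dg_def transpose_def)
    next
      fix a b assume ij: "i = Inl a" "j = Inr b"
      then show ?thesis using off2[of i j] unfolding emb by (simp add: dg_def cong_0_iff)
    next
      fix a b assume ij: "i = Inr a" "j = Inl b"
      then show ?thesis using off2[of i j] unfolding emb by (simp add: dg_def cong_0_iff)
    qed
  qed
  define \<beta> where "\<beta> = g ** F"
  have bSp: "\<beta> \<in> Sp" unfolding \<beta>_def using Sp_mult[OF Sp FSp] .
  have bI: "mcong 2 \<beta> (mat 1)" unfolding \<beta>_def
    using mcong_mult[OF gE mcong_refl, of F] EF by simp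
  have boff: "2 * m dvd \<beta>$i$j" if "isl i \<noteq> isl j" for i j
    unfolding \<beta>_def matrix_matrix_mult_def vec_lambda_beta
  proof (rule dvd_sum)
    fix l
    show "2 * m dvd g $ i $ l * F $ l $ j"
    proof (cases "isl l = isl j")
      case True
      then have "isl i \<noteq> isl l" using that by simp
      then show ?thesis using offm by simp
    next
      case False
      then show ?thesis unfolding F_def by (simp add: dg_zero)
    qed
  qed
  have bG: "\<beta> \<in> Gamma2 m"
    unfolding Gamma2_def mem_Collect_eq
  proof (intro conjI allI impI bSp)
    fix i j :: "'n + 'n"
    show "[\<beta>$i$j = (mat 1 :: 'n smat)$i$j] (mod 2)" using bI unfolding mcong_def by blast
    assume "isl i \<noteq> isl j"
    then show "[\<beta>$i$j = 0] (mod 2 * m)" using boff by (simp add: cong_0_iff)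
  qed
  have uG: "u \<in> GLZ" using u(1) by (simp add: GLZ_def)
  have geq: "g = \<beta> ** embGL u"
  proof -
    have "\<beta> ** embGL u = g ** (F ** embGL u)" unfolding \<beta>_def by (simp add: matrix_mul_assoc)
    then show ?thesis using FE by simp
  qed
  show ?thesis
  proof (rule bexI[OF _ bG])
    show "\<exists>u\<in>GLZ. g = \<beta> ** embGL u" using bexI[where P="\<lambda>u. g = \<beta> ** embGL u", OF geq uG] .
  qed
qed


theorem lemma4p5:
  fixes g :: "'n::finite smat" and m :: int
  assumes "g \<in> Sp" and "m \<ge> 1"
  shows "(g \<in> Gamma m \<longrightarrow> tau g ** matrix_inv g \<in> Gamma (2 * m))
       \<and> (g \<in> Gamma (2 * m) \<longrightarrow> tau g ** g \<in> Gamma (4 * m))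
       \<and> (tau g ** matrix_inv g \<in> Gamma (4 * m) \<longrightarrow>
            (\<exists>\<beta> \<in> Gamma2 m. \<exists>u \<in> GLZ. g = \<beta> ** embGL u))"
proof (intro conjI impI)
  show "tau g ** matrix_inv g \<in> Gamma (2 * m)" if "g \<in> Gamma m" using part1[OF that] .
  show "tau g ** g \<in> Gamma (4 * m)" if "g \<in> Gamma (2 * m)" using part2[OF that] .
  show "\<exists>\<beta> \<in> Gamma2 m. \<exists>u \<in> GLZ. g = \<beta> ** embGL u" if "tau g ** matrix_inv g \<in> Gamma (4 * m)"
    using part3[OF assms(1) that] .
qed

end
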